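(* Assume (A1), (A2), (A3). There are explicit constants $\mathcal C_1,\mathcal C_2,\mathcal C_r,\mathcal C_z>0$ such that for all $x,x',v,v'\in\mathbb R^d$, \[|x-x'|+|v-v'|\le\mathcal C_1\rho((x,v),(x',v')),\qquad |x-x'|^2+|v-v'|^2\le\mathcal C_2\rho((x,v),(x',v')),\] \[r(x,x',v,v')\le\mathcal C_r\rho((x,v),(x',v')),\qquad |x-x'|\le\mathcal C_zf(r(x,x',v,v'))\big(1+\epsilon\sqrt{H(x,v)}+\epsilon\sqrt{H(x',v')}\big).\]
   Context: $U,W\in\mathcal C^1(\mathbb R^d)$. (A1): $U\ge0$ and there exist $\lambda>0$, $A\ge0$ with $\tfrac12\nabla U(x)\cdot x\ge\lambda(U(x)+|x|^2/4)-A$ for all $x$. (A2): $\nabla U$ is $L_U$-Lipschitz, $L_U>0$. (A3): $W$ even, $\nabla W$ is $L_W$-Lipschitz, $L_W<\lambda/8$. Fix $\tilde A\ge0$ with $U(x)\ge\frac\lambda6|x|^2-\tilde A$ for all $x$. Set $\gamma=\frac{\lambda}{2(\lambda+1)}$, $B=24(A+(\lambda-\gamma)\tilde A+d)$, $H(x,v)=24U(x)+(6(1-\gamma)+\lambda)|x|^2+12x\cdot v+12|v|^2$, $\alpha=L_U+\frac\lambda4$, $R_1=\sqrt{\frac{24((1+\alpha)^2+\alpha^2)}{5\gamma\min(3,\lambda/3)}B}$, $r(x,\tilde x,v,\tilde v)=\alpha|x-\tilde x|+|x-\tilde x+v-\tilde v|$, $\kappa_0=\frac{L_U+L_W}\alpha+\alpha+96\max(\frac1{2\alpha},1)$,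 $c=\min\{\frac\gamma{36},\frac B3,\frac17\min(\frac12-\frac{L_U+L_W}{2\alpha},2\sqrt{\frac{L_U+L_W}{2\pi\alpha}})\exp(-\frac18\kappa_0R_1^2)\}$, $\epsilon=3c/B$, $\mathbf C=c+2\epsilon B$, $\phi(s)=\exp(-\frac18(\frac{L_U+L_W}\alpha+\alpha+96\epsilon\max(\frac1{2\alpha},1))s^2)$, $\Phi(s)=\int_0^s\phi$, $g(s)=1-\frac{\mathbf C}4\int_0^s\frac{\Phi(u)}{\phi(u)}du$, $f(s)=\int_0^{\min(s,R_1)}\phi(u)g(u)du$. Finally $\rho((x,v),(\tilde x,\tilde v))=f(r(x,\tilde x,v,\tilde v))\big(1+\epsilon H(x,v)+\epsilon H(\tilde x,\tilde v)\big)$. *)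

theory Defs
  imports "HOL-Analysis.Analysis"
begin

definition gam :: "real \<Rightarrow> real" where
  "gam lam = lam / (2 * (lam + 1))"

definition Bc :: "real \<Rightarrow> real \<Rightarrow> real \<Rightarrow> nat \<Rightarrow> real" where
  "Bc lam A At d = 24 * (A + (lam - gam lam) * At + real d)"

definition Hf :: "('a::real_inner \<Rightarrow> real) \<Rightarrow> real \<Rightarrow> 'a \<Rightarrow> 'a \<Rightarrow> real" where
  "Hf U lam x v = 24 * U x + (6 * (1 - gam lam) + lam) * (norm x)\<^sup>2 + 12 * (x \<bullet> v) + 12 * (norm v)\<^sup>2"

definition alph :: "real \<Rightarrow> real \<Rightarrow> real" where
  "alph lam LU = LU + lam / 4"

definition R1 :: "real \<Rightarrow> real \<Rightarrow> real \<Rightarrow> real \<Rightarrow> nat \<Rightarrow> real" where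
  "R1 lam A At LU d =
     sqrt (24 * ((1 + alph lam LU)\<^sup>2 + (alph lam LU)\<^sup>2) / (5 * gam lam * min 3 (lam / 3)) * Bc lam A At d)"

definition rdist :: "real \<Rightarrow> 'a::real_normed_vector \<Rightarrow> 'a \<Rightarrow> 'a \<Rightarrow> 'a \<Rightarrow> real" where
  "rdist al x x' v v' = al * norm (x - x') + norm (x - x' + v - v')"

definition kappa0 :: "real \<Rightarrow> real \<Rightarrow> real \<Rightarrow> real" where
  "kappa0 lam LU LW = (LU + LW) / alph lam LU + alph lam LU + 96 * max (1 / (2 * alph lam LU)) 1"

definition cc :: "real \<Rightarrow> real \<Rightarrow> real \<Rightarrow> real \<Rightarrow> real \<Rightarrow> nat \<Rightarrow> real" where
  "cc lam A At LU LW d =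
     min (gam lam / 36) (min (Bc lam A At d / 3)
       ((1/7) * min (1/2 - (LU + LW) / (2 * alph lam LU))
                    (2 * sqrt ((LU + LW) / (2 * pi * alph lam LU)))
          * exp (- (1/8) * kappa0 lam LU LW * (R1 lam A At LU d)\<^sup>2)))"

definition epsc :: "real \<Rightarrow> real \<Rightarrow> real \<Rightarrow> real \<Rightarrow> real \<Rightarrow> nat \<Rightarrow> real" where
  "epsc lam A At LU LW d = 3 * cc lam A At LU LW d / Bc lam A At d"

definition Cbig :: "real \<Rightarrow> real \<Rightarrow> real \<Rightarrow> real \<Rightarrow> real \<Rightarrow> nat \<Rightarrow> real" where
  "Cbig lam A At LU LW d = cc lam A At LU LW d + 2 * epsc lam A At LU LW d * Bc lam A At d"

definition phif :: "real \<Rightarrow> real \<Rightarrow> real \<Rightarrow> real \<Rightarrow> real \<Rightarrow> nat \<Rightarrow> real \<Rightarrow> real" where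
  "phif lam A At LU LW d s =
     exp (- (1/8) * ((LU + LW) / alph lam LU + alph lam LU
            + 96 * epsc lam A At LU LW d * max (1 / (2 * alph lam LU)) 1) * s\<^sup>2)"

definition Phif :: "real \<Rightarrow> real \<Rightarrow> real \<Rightarrow> real \<Rightarrow> real \<Rightarrow> nat \<Rightarrow> real \<Rightarrow> real" where
  "Phif lam A At LU LW d s = integral {0..s} (phif lam A At LU LW d)"

definition gf :: "real \<Rightarrow> real \<Rightarrow> real \<Rightarrow> real \<Rightarrow> real \<Rightarrow> nat \<Rightarrow> real \<Rightarrow> real" where
  "gf lam A At LU LW d s = 1 - Cbig lam A At LU LW d / 4 *
     integral {0..s} (\<lambda>u. Phif lam A At LU LW d u / phif lam A At LU LW d u)"

definition ff :: "real \<Rightarrow> real \<Rightarrow> real \<Rightarrow> real \<Rightarrow> real \<Rightarrow> nat \<Rightarrow> real \<Rightarrow> real" where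
  "ff lam A At LU LW d s = integral {0..min s (R1 lam A At LU d)}
     (\<lambda>u. phif lam A At LU LW d u * gf lam A At LU LW d u)"

definition rho :: "('a::euclidean_space \<Rightarrow> real) \<Rightarrow> real \<Rightarrow> real \<Rightarrow> real \<Rightarrow> real \<Rightarrow> real
    \<Rightarrow> ('a \<times> 'a) \<Rightarrow> ('a \<times> 'a) \<Rightarrow> real" where
  "rho U lam A At LU LW z z' =
     (let d = DIM('a); e = epsc lam A At LU LW d in
      ff lam A At LU LW d (rdist (alph lam LU) (fst z) (fst z') (snd z) (snd z'))
      * (1 + e * Hf U lam (fst z) (snd z) + e * Hf U lam (fst z') (snd z')))"

end

theory Submission
  imports Defs
begin

lemma f_lower:
  fixes K R C s :: real and \<phi> :: "real \<Rightarrow> real"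
  assumes K: "K \<ge> 0" and R: "R > 0" and C: "C \<ge> 0"
    and small: "C / 4 * (R * (R * exp ((1/8) * K * R\<^sup>2))) \<le> 1/2"
    and s: "s \<ge> 0"
    and phi: "\<phi> = (\<lambda>s. exp (- (1/8) * K * s\<^sup>2))"
  shows "integral {0..min s R} (\<lambda>u. \<phi> u * (1 - C / 4 * integral {0..u} (\<lambda>u. integral {0..u} \<phi> / \<phi> u)))
           \<ge> exp (- (1/8) * K * R\<^sup>2) / 2 * min s R"
proof -
  define M where "M = R * exp ((1/8) * K * R\<^sup>2)"
  define h where "h = (\<lambda>u. integral {0..u} \<phi> / \<phi> u)"
  define G where "G = (\<lambda>u. 1 - C / 4 * integral {0..u} h)"
  have phic: "continuous_on S \<phi>" for S
    unfolding phi by (intro continuous_intros)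
  have phipos: "\<phi> u > 0" for u unfolding phi by simp
  have phile: "\<phi> u \<le> 1" for u unfolding phi using K by simp
  have phiint: "\<phi> integrable_on {a..b}" for a b
    by (rule integrable_continuous_interval[OF phic])
  have PhiC: "continuous_on {0..R} (\<lambda>u. integral {0..u} \<phi>)"
    by (rule indefinite_integral_continuous_1[OF phiint])
  have hC: "continuous_on {0..R} h"
    unfolding h_def using PhiC phic phipos
    by (intro continuous_on_divide) (auto simp: less_imp_neq[symmetric] dest: sym)
  have hint: "h integrable_on {0..R}"
    by (rule integrable_continuous_interval[OF hC])
  have hle: "h u \<le> M" if "u \<in> {0..R}" for u
  proof -
    have u: "0 \<le> u" "u \<le> R" using that by auto
    have "integral {0..u} \<phi> \<le> integral {0..u} (\<lambda>_. 1::real)"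
      by (rule integral_le[OF phiint]) (auto simp: phile)
    also have "\<dots> = u" using u by simp
    finally have I1: "integral {0..u} \<phi> \<le> R" using u by linarith
    have I0: "integral {0..u} \<phi> \<ge> 0"
      by (rule integral_nonneg[OF phiint]) (simp add: less_imp_le[OF phipos])
    have "1 / \<phi> u = exp ((1/8) * K * u\<^sup>2)" unfolding phi by (simp add: exp_minus field_simps)
    also have "\<dots> \<le> exp ((1/8) * K * R\<^sup>2)"
      using u K by (simp add: mult_left_mono power_mono)
    finally have E: "1 / \<phi> u \<le> exp ((1/8) * K * R\<^sup>2)" .
    have "h u = integral {0..u} \<phi> * (1 / \<phi> u)" unfolding h_def by simp
    also have "\<dots> \<le> R * exp ((1/8) * K * R\<^sup>2)"
      using I0 I1 E phipos[of u] R by (intro mult_mono) auto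
    finally show ?thesis unfolding M_def .
  qed
  have Gge: "G u \<ge> 1/2" if "u \<in> {0..R}" for u
  proof -
    have u: "0 \<le> u" "u \<le> R" using that by auto
    have hi: "h integrable_on {0..u}"
      by (rule integrable_on_subinterval[OF hint]) (use u in auto)
    have "integral {0..u} h \<le> integral {0..u} (\<lambda>_. M)"
      by (rule integral_le[OF hi]) (use hle u in auto)
    also have "\<dots> = u * M" using u by simp
    also have "\<dots> \<le> R * M" using u R unfolding M_def
      by (intro mult_right_mono) auto
    finally have "integral {0..u} h \<le> R * M" .
    hence "C / 4 * integral {0..u} h \<le> C / 4 * (R * M)" using C by (simp add: mult_left_mono)
    thus ?thesis using small unfolding G_def M_def by linarith
  qed
  have GC: "continuous_on {0..R} G"
    unfolding G_def by (intro continuous_intros indefinite_integral_continuous_1[OF hint])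
  define t where "t = min s R"
  have t: "0 \<le> t" "t \<le> R" using s R unfolding t_def by auto
  have pgC: "continuous_on {0..t} (\<lambda>u. \<phi> u * G u)"
    using t by (intro continuous_intros phic continuous_on_subset[OF GC]) auto
  have "integral {0..t} (\<lambda>_. exp (- (1/8) * K * R\<^sup>2) / 2) \<le> integral {0..t} (\<lambda>u. \<phi> u * G u)"
  proof (rule integral_le[OF _ integrable_continuous_interval[OF pgC]])
    show "(\<lambda>_. exp (- (1/8) * K * R\<^sup>2) / 2) integrable_on {0..t}" by (rule integrable_const_ivl)
    fix u assume u: "u \<in> {0..t}"
    have "exp (- (1/8) * K * R\<^sup>2) \<le> \<phi> u"
      unfolding phi using u t K by (simp add: mult_left_mono power_mono)
    moreover have "1/2 \<le> G u" using Gge u t by auto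
    ultimately show "exp (- (1/8) * K * R\<^sup>2) / 2 \<le> \<phi> u * G u"
      using mult_mono[of "exp (- (1/8) * K * R\<^sup>2)" "\<phi> u" "1/2" "G u"] phipos[of u] by simp
  qed
  thus ?thesis using t unfolding t_def[symmetric] G_def h_def by (simp add: mult.commute)
qed

lemma sq2: "((a::real) + b)\<^sup>2 \<le> 2 * (a\<^sup>2 + b\<^sup>2)"
proof -
  have "0 \<le> (a - b)\<^sup>2" by simp
  thus ?thesis by (simp add: power2_eq_square algebra_simps)
qed

lemma H_bound:
  fixes U :: "'a::real_inner \<Rightarrow> real"
  assumes lam: "lam > 0" and U: "U x \<ge> 0"
  shows "(norm x + norm v)\<^sup>2 \<le> 9 / (2 * min lam 3) * Hf U lam x v" "Hf U lam x v \<ge> 0"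
proof -
  define w where "w = x + 2 *\<^sub>R v"
  define \<mu> where "\<mu> = min lam 3"
  have mu: "\<mu> > 0" "\<mu> \<le> lam" "\<mu> \<le> 3" using lam unfolding \<mu>_def by auto
  have g: "3 - 6 * gam lam \<ge> 0" using lam unfolding gam_def by (simp add: field_simps)
  have wsq: "(norm w)\<^sup>2 = (norm x)\<^sup>2 + 4 * (x \<bullet> v) + 4 * (norm v)\<^sup>2"
    unfolding w_def power2_norm_eq_inner by (simp add: inner_add_left inner_add_right inner_commute)
  have Heq: "Hf U lam x v = 24 * U x + (3 - 6 * gam lam + lam) * (norm x)\<^sup>2 + 3 * (norm w)\<^sup>2"
    unfolding Hf_def wsq by (simp add: algebra_simps)
  have "(3 - 6 * gam lam) * (norm x)\<^sup>2 \<ge> 0" using g by simp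
  hence H1: "Hf U lam x v \<ge> lam * (norm x)\<^sup>2 + 3 * (norm w)\<^sup>2" using Heq U by (simp add: algebra_simps)
  have "\<mu> * ((norm x)\<^sup>2 + (norm w)\<^sup>2) \<le> lam * (norm x)\<^sup>2 + 3 * (norm w)\<^sup>2"
    using mu by (simp add: distrib_left add_mono mult_right_mono)
  hence H2: "\<mu> * ((norm x)\<^sup>2 + (norm w)\<^sup>2) \<le> Hf U lam x v" using H1 by linarith
  show "Hf U lam x v \<ge> 0" using H2 mu by (smt (verit) mult_nonneg_nonneg zero_le_power2)
  have "2 * norm v = norm (w - x)" unfolding w_def by simp
  also have "\<dots> \<le> norm w + norm x" by (rule norm_triangle_ineq4)
  finally have nv: "2 * norm v \<le> norm w + norm x" .
  have "norm x + norm v \<le> 3/2 * (norm x + norm w)" using nv norm_ge_zero[of w] by argo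
  hence "(norm x + norm v)\<^sup>2 \<le> (3/2 * (norm x + norm w))\<^sup>2"
    by (intro power_mono) auto
  also have "\<dots> = 9/4 * (norm x + norm w)\<^sup>2" by (simp add: power2_eq_square algebra_simps)
  also have "\<dots> \<le> 9/4 * (2 * ((norm x)\<^sup>2 + (norm w)\<^sup>2))"
    using sq2[of "norm x" "norm w"] by simp
  also have "\<dots> = 9 / (2 * \<mu>) * (\<mu> * ((norm x)\<^sup>2 + (norm w)\<^sup>2))" using mu by simp
  also have "\<dots> \<le> 9 / (2 * \<mu>) * Hf U lam x v" using H2 mu by (intro mult_left_mono) auto
  finally show "(norm x + norm v)\<^sup>2 \<le> 9 / (2 * min lam 3) * Hf U lam x v" unfolding \<mu>_def .
qed

lemma sqrt_le_1p: "(H::real) \<ge> 0 \<Longrightarrow> sqrt H \<le> 1 + H"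
proof -
  assume H: "H \<ge> 0"
  have "H \<le> (1 + H)\<^sup>2" using H by (simp add: power2_eq_square algebra_simps)
  hence "sqrt H \<le> sqrt ((1 + H)\<^sup>2)" by (rule real_sqrt_le_mono)
  also have "\<dots> = 1 + H" using H by simp
  finally show ?thesis .
qed

lemma final_arith:
  fixes u nvv z nx nx' nv nv' H H' F a R \<epsilon> \<alpha> P P2 :: real
  assumes pos: "u \<ge> 0" "nvv \<ge> 0" "z \<ge> 0" "\<alpha> > 0" "a > 0" "R > 0" "\<epsilon> > 0" "\<epsilon> \<le> 1"
    "P \<ge> 0" "P2 \<ge> 0" "H \<ge> 0" "H' \<ge> 0" "nx \<ge> 0" "nx' \<ge> 0" "nv \<ge> 0" "nv' \<ge> 0"
    and tri: "nvv \<le> z + u" "z \<le> u + nvv" "u \<le> nx + nx'" "nvv \<le> nv + nv'"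
    and HP: "nx + nv \<le> P * sqrt H" "nx' + nv' \<le> P * sqrt H'"
      "nx\<^sup>2 + nv\<^sup>2 \<le> P2 * H" "nx'\<^sup>2 + nv'\<^sup>2 \<le> P2 * H'"
    and F: "F \<ge> a * min (\<alpha> * u + z) R"
  defines "\<rho> \<equiv> F * (1 + \<epsilon> * H + \<epsilon> * H')"
  shows "u + nvv \<le> ((1 + 2/\<alpha>)/a + 2*P/(\<epsilon>*a*R)) * \<rho>
       \<and> u\<^sup>2 + nvv\<^sup>2 \<le> ((1 + 2/\<alpha>)\<^sup>2*R/a + 2*P2/(\<epsilon>*a*R)) * \<rho>
       \<and> \<alpha> * u + z \<le> (1/a + (\<alpha>+1)*(2*P/(\<epsilon>*a*R))) * \<rho>
       \<and> u \<le> (1/(a*\<alpha>) + P/(\<epsilon>*a*R)) * F * (1 + \<epsilon> * sqrt H + \<epsilon> * sqrt H')"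
proof -
  define r where "r = \<alpha> * u + z"
  define W where "W = 1 + \<epsilon> * H + \<epsilon> * H'"
  define W' where "W' = 1 + \<epsilon> * sqrt H + \<epsilon> * sqrt H'"
  define Q where "Q = 1 + 2/\<alpha>"
  define K1 where "K1 = 2*P/(\<epsilon>*a*R)"
  define K2 where "K2 = 2*P2/(\<epsilon>*a*R)"
  define K4 where "K4 = P/(\<epsilon>*a*R)"
  have r0: "r \<ge> 0" unfolding r_def using pos by simp
  have W1: "W \<ge> 1" unfolding W_def using pos by simp
  have W'1: "W' \<ge> 1" unfolding W'_def using pos by simp
  have F0: "F \<ge> 0" using F pos r0 unfolding r_def[symmetric] by (smt (verit) min_def mult_nonneg_nonneg)
  have rho0: "\<rho> \<ge> 0" unfolding \<rho>_def using F0 W1 W_def by simp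
  have Q0: "Q \<ge> 0" unfolding Q_def using pos by simp
  have K1: "K1 \<ge> 0" "K2 \<ge> 0" "K4 \<ge> 0" unfolding K1_def K2_def K4_def using pos by auto
  have rhoF: "\<rho> = F * W" unfolding \<rho>_def W_def ..
  show ?thesis
  proof (cases "r \<le> R")
    case True
    have Fr: "F \<ge> a * r" using F True unfolding r_def[symmetric] by simp
    have "F \<le> \<rho>" unfolding rhoF using F0 W1 by (simp add: mult_le_cancel_left1)
    hence rr: "r \<le> \<rho> / a" using Fr pos by (simp add: field_simps)
    have ur: "u \<le> r / \<alpha>" unfolding r_def using pos by (simp add: field_simps)
    have D: "u + nvv \<le> Q * r"
    proof -
      have "u + nvv \<le> 2 * u + z" using tri by simp
      also have "\<dots> \<le> 2 * (r/\<alpha>) + r"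
      proof -
        have "z \<le> r" unfolding r_def using pos by simp
        thus ?thesis using ur by linarith
      qed
      also have "\<dots> = Q * r" unfolding Q_def by (simp add: algebra_simps)
      finally show ?thesis .
    qed
    have "u + nvv \<le> Q * (\<rho>/a)" using D rr Q0 by (smt (verit) mult_left_mono)
    also have "\<dots> \<le> (Q/a + K1) * \<rho>" using K1 rho0 by (simp add: algebra_simps)
    finally have c1: "u + nvv \<le> (Q/a + K1) * \<rho>" .
    have "u\<^sup>2 + nvv\<^sup>2 \<le> (u + nvv)\<^sup>2" using pos by (simp add: power2_eq_square algebra_simps)
    also have "\<dots> \<le> (Q * r)\<^sup>2" using D pos by (intro power_mono) auto
    also have "\<dots> = Q\<^sup>2 * r * r" by (simp add: power2_eq_square)
    also have "\<dots> \<le> Q\<^sup>2 * R * (\<rho>/a)" using True rr r0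
      by (intro mult_mono mult_left_mono) auto
    also have "\<dots> \<le> (Q\<^sup>2*R/a + K2) * \<rho>" using K1 rho0 by (simp add: algebra_simps)
    finally have c2: "u\<^sup>2 + nvv\<^sup>2 \<le> (Q\<^sup>2*R/a + K2) * \<rho>" .
    have "r \<le> 1/a * \<rho>" using rr by simp
    also have "\<dots> \<le> (1/a + (\<alpha>+1)*K1) * \<rho>" using K1 rho0 pos by (simp add: algebra_simps)
    finally have c3: "r \<le> (1/a + (\<alpha>+1)*K1) * \<rho>" .
    have au: "\<alpha> * u \<le> r" unfolding r_def using pos by simp
    have "a * (\<alpha> * u) \<le> F" using mult_left_mono[OF au, of a] Fr pos by linarith
    hence "\<alpha> * (a * u) \<le> F" by (simp add: mult.left_commute)
    hence "u \<le> F / (a*\<alpha>)" using pos by (simp add: field_simps)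
    also have "\<dots> \<le> (1/(a*\<alpha>)) * F * W'" using F0 W'1 pos by (simp add: mult_le_cancel_left1 field_simps)
    also have "\<dots> \<le> (1/(a*\<alpha>) + K4) * F * W'" using F0 W'1 K1
      by (intro mult_right_mono) auto
    finally have c4: "u \<le> (1/(a*\<alpha>) + K4) * F * W'" .
    show ?thesis using c1 c2 c3 c4 unfolding Q_def K1_def K2_def K4_def W'_def r_def by simp
  next
    case False
    have FR: "F \<ge> a * R" using F False unfolding r_def[symmetric] by simp
    have "a * R * W \<le> \<rho>" unfolding rhoF using FR W1 by (intro mult_right_mono) auto
    hence WR: "W \<le> \<rho> / (a * R)" using pos by (simp add: field_simps)
    have sH: "sqrt H \<le> 1 + H" "sqrt H' \<le> 1 + H'" using pos sqrt_le_1p by auto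
    have "u + nvv \<le> P * sqrt H + P * sqrt H'" using tri HP by simp
    also have "\<dots> \<le> P * (2 + H + H')" using sH pos
      by (simp add: distrib_left[symmetric] mult_left_mono)
    also have "\<dots> \<le> P * (2/\<epsilon> * W)"
    proof (intro mult_left_mono)
      have "2/\<epsilon> * W = 2/\<epsilon> + 2*H + 2*H'" unfolding W_def using pos by (simp add: field_simps)
      moreover have "2/\<epsilon> \<ge> 2" using pos by (simp add: field_simps)
      ultimately show "2 + H + H' \<le> 2/\<epsilon> * W" using pos by simp
    qed (use pos in auto)
    also have "\<dots> \<le> P * (2/\<epsilon> * (\<rho> / (a*R)))" using WR pos by (intro mult_left_mono) auto
    also have "\<dots> = K1 * \<rho>" unfolding K1_def by (simp add: field_simps)
    finally have D: "u + nvv \<le> K1 * \<rho>" .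
    have c1: "u + nvv \<le> (Q/a + K1) * \<rho>" using D Q0 rho0 pos
      by (smt (verit) divide_nonneg_pos mult_nonneg_nonneg distrib_right)
    have "u\<^sup>2 + nvv\<^sup>2 \<le> (nx + nx')\<^sup>2 + (nv + nv')\<^sup>2"
      using tri pos by (intro add_mono power_mono) auto
    also have "\<dots> \<le> 2 * (nx\<^sup>2 + nx'\<^sup>2) + 2 * (nv\<^sup>2 + nv'\<^sup>2)"
      using sq2[of nx nx'] sq2[of nv nv'] by simp
    also have "\<dots> \<le> 2 * P2 * (H + H')" using HP by (simp add: algebra_simps)
    also have "\<dots> \<le> 2 * P2 * (W / \<epsilon>)"
    proof (intro mult_left_mono)
      have "W / \<epsilon> = 1/\<epsilon> + H + H'" unfolding W_def using pos by (simp add: field_simps)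
      thus "H + H' \<le> W / \<epsilon>" using pos by simp
    qed (use pos in auto)
    also have "\<dots> \<le> 2 * P2 * ((\<rho> / (a*R)) / \<epsilon>)" using WR pos
      by (intro mult_left_mono divide_right_mono) auto
    also have "\<dots> = K2 * \<rho>" unfolding K2_def by (simp add: field_simps)
    finally have D2: "u\<^sup>2 + nvv\<^sup>2 \<le> K2 * \<rho>" .
    have c2: "u\<^sup>2 + nvv\<^sup>2 \<le> (Q\<^sup>2*R/a + K2) * \<rho>" using D2 rho0 pos
      by (smt (verit) divide_nonneg_pos mult_nonneg_nonneg distrib_right zero_le_power2)
    have e: "(\<alpha>+1) * (u + nvv) = \<alpha>*u + \<alpha>*nvv + u + nvv" by (simp add: algebra_simps)
    have "\<alpha>*nvv \<ge> 0" using pos by simp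
    hence "r \<le> (\<alpha>+1) * (u + nvv)" unfolding r_def e using tri by linarith
    also have "\<dots> \<le> (\<alpha>+1) * (K1 * \<rho>)" using D pos by (intro mult_left_mono) auto
    finally have c3: "r \<le> (1/a + (\<alpha>+1)*K1) * \<rho>" using rho0 pos
      by (smt (verit) divide_nonneg_pos mult_nonneg_nonneg distrib_right mult.assoc)
    have "u \<le> P * sqrt H + P * sqrt H'" using tri HP pos by simp
    also have "\<dots> = P/\<epsilon> * (W' - 1)" unfolding W'_def using pos by (simp add: field_simps)
    also have "\<dots> \<le> P/\<epsilon> * W'" using pos by (intro mult_left_mono) auto
    also have "\<dots> = K4 * (a * R) * W'" unfolding K4_def using pos by (simp add: field_simps)
    also have "\<dots> \<le> K4 * F * W'" using FR K1 W'1 by (intro mult_right_mono mult_left_mono) auto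
    also have "\<dots> \<le> (1/(a*\<alpha>) + K4) * F * W'" using F0 W'1 pos
      by (intro mult_right_mono) auto
    finally have c4: "u \<le> (1/(a*\<alpha>) + K4) * F * W'" .
    show ?thesis using c1 c2 c3 c4 unfolding Q_def K1_def K2_def K4_def W'_def r_def by simp
  qed
qed

theorem lemma2p6:
  fixes U W :: "'a::euclidean_space \<Rightarrow> real"
    and gradU gradW :: "'a \<Rightarrow> 'a"
    and lam A At LU LW :: real
  assumes U_grad: "\<And>x. (U has_derivative (\<lambda>h. gradU x \<bullet> h)) (at x)"
    and U_C1: "continuous_on UNIV gradU"
    and W_grad: "\<And>x. (W has_derivative (\<lambda>h. gradW x \<bullet> h)) (at x)"
    and W_C1: "continuous_on UNIV gradW"
    and A1_nonneg: "\<And>x. U x \<ge> 0"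
    and A1_lam: "lam > 0" and A1_A: "A \<ge> 0"
    and A1: "\<And>x. (1/2) * (gradU x \<bullet> x) \<ge> lam * (U x + (norm x)\<^sup>2 / 4) - A"
    and A2: "LU > 0" "lipschitz_on LU UNIV gradU"
    and A3_even: "\<And>x. W (- x) = W x"
    and A3_lip: "lipschitz_on LW UNIV gradW" and A3_LW: "LW < lam / 8"
    and At: "At \<ge> 0" "\<And>x. U x \<ge> lam / 6 * (norm x)\<^sup>2 - At"
  shows "\<exists>C1 C2 Cr Cz. C1 > 0 \<and> C2 > 0 \<and> Cr > 0 \<and> Cz > 0 \<and>
    (\<forall>x x' v v' :: 'a.
       norm (x - x') + norm (v - v') \<le> C1 * rho U lam A At LU LW (x, v) (x', v')
     \<and> (norm (x - x'))\<^sup>2 + (norm (v - v'))\<^sup>2 \<le> C2 * rho U lam A At LU LW (x, v) (x', v')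
     \<and> rdist (alph lam LU) x x' v v' \<le> Cr * rho U lam A At LU LW (x, v) (x', v')
     \<and> norm (x - x') \<le> Cz * ff lam A At LU LW DIM('a) (rdist (alph lam LU) x x' v v')
         * (1 + epsc lam A At LU LW DIM('a) * sqrt (Hf U lam x v)
              + epsc lam A At LU LW DIM('a) * sqrt (Hf U lam x' v')))"
proof -
  define d where "d = DIM('a)"
  define \<alpha> where "\<alpha> = alph lam LU"
  define \<gamma> where "\<gamma> = gam lam"
  define B where "B = Bc lam A At d"
  define c where "c = cc lam A At LU LW d"
  define \<epsilon> where "\<epsilon> = epsc lam A At LU LW d"
  define R where "R = R1 lam A At LU d"
  define \<kappa> where "\<kappa> = kappa0 lam LU LW"
  define Cb where "Cb = Cbig lam A At LU LW d"
  define K where "K = (LU + LW) / \<alpha> + \<alpha> + 96 * \<epsilon> * max (1 / (2 * \<alpha>)) 1"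
  define m1 where "m1 = 1/2 - (LU + LW) / (2 * \<alpha>)"
  define m2 where "m2 = 2 * sqrt ((LU + LW) / (2 * pi * \<alpha>))"
  have LW0: "LW \<ge> 0" using A3_lip unfolding lipschitz_on_def by simp
  have al: "\<alpha> = LU + lam / 4" unfolding \<alpha>_def alph_def ..
  have alpos: "\<alpha> > 0" using al A2 A1_lam by simp
  have allt: "LU + LW < \<alpha>" using al A3_LW A1_lam by simp
  have g: "\<gamma> > 0" "\<gamma> \<le> lam / 2" "\<gamma> < 1/2" using A1_lam unfolding \<gamma>_def gam_def
    by (auto simp: field_simps)
  have d1: "real d \<ge> 1" unfolding d_def using DIM_positive[where 'a='a] by linarith
  have "(lam - \<gamma>) * At \<ge> 0" using g At by simp
  hence B24: "B \<ge> 24" unfolding B_def Bc_def \<gamma>_def[symmetric] using d1 A1_A by argo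
  have m1: "m1 > 0" "m1 \<le> 1/2" unfolding m1_def using allt alpos A2 LW0
    by (auto simp: field_simps)
  have m2: "m2 > 0" unfolding m2_def using alpos A2 LW0 by (simp add: field_simps)
  have cdef: "c = min (\<gamma>/36) (min (B/3) ((1/7) * min m1 m2 * exp (- (1/8) * \<kappa> * R\<^sup>2)))"
    unfolding c_def cc_def \<gamma>_def B_def m1_def m2_def \<kappa>_def R_def \<alpha>_def ..
  have cpos: "c > 0" unfolding cdef using g B24 m1 m2 by simp
  have cle3: "(1/7) * min m1 m2 * exp (- (1/8) * \<kappa> * R\<^sup>2) \<le> (1/7) * m1 * exp (- (1/8) * \<kappa> * R\<^sup>2)"
    by (intro mult_right_mono mult_left_mono) auto
  have cle: "c \<le> \<gamma>/36" "c \<le> B/3" "c \<le> (1/7) * m1 * exp (- (1/8) * \<kappa> * R\<^sup>2)"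
    unfolding cdef using cle3 by linarith+
  have epsdef: "\<epsilon> = 3 * c / B" unfolding \<epsilon>_def epsc_def c_def B_def ..
  have epos: "\<epsilon> > 0" using cpos B24 epsdef by simp
  have "6 * c \<le> B" using cle(1) g B24 by linarith
  hence ele: "\<epsilon> \<le> 1/2" unfolding epsdef using B24 by (simp add: field_simps)
  have Cb7: "Cb = 7 * c" unfolding Cb_def Cbig_def epsc_def c_def[symmetric] B_def[symmetric]
    using B24 by simp
  have Rpos: "R > 0"
  proof -
    have "24 * ((1 + \<alpha>)\<^sup>2 + \<alpha>\<^sup>2) / (5 * \<gamma> * min 3 (lam / 3)) * B > 0"
      using alpos g B24 A1_lam by (intro mult_pos_pos divide_pos_pos add_pos_pos) auto
    thus ?thesis unfolding R_def R1_def \<alpha>_def[symmetric] \<gamma>_def[symmetric] B_def[symmetric] by simp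
  qed
  have K0: "K \<ge> 0" unfolding K_def using alpos A2 LW0 epos by (intro add_nonneg_nonneg) auto
  have Kk: "K - \<kappa> \<le> -48"
  proof -
    have "\<kappa> - K = 96 * (1 - \<epsilon>) * max (1 / (2 * \<alpha>)) 1"
      unfolding \<kappa>_def kappa0_def K_def \<alpha>_def[symmetric] by (simp add: algebra_simps)
    moreover have "96 * (1 - \<epsilon>) * max (1 / (2 * \<alpha>)) 1 \<ge> 48 * 1"
    proof (rule mult_mono)
      show "48 \<le> 96 * (1 - \<epsilon>)" using ele by argo
      show "1 \<le> max (1 / (2 * \<alpha>)) 1" by (rule max.cobounded2)
    qed (use ele in auto)
    ultimately show ?thesis by linarith
  qed
  have small: "Cb / 4 * (R * (R * exp ((1/8) * K * R\<^sup>2))) \<le> 1/2"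
  proof -
    define E where "E = exp (- (1/8) * \<kappa> * R\<^sup>2)"
    define E2 where "E2 = exp ((1/8) * K * R\<^sup>2)"
    define X where "X = R\<^sup>2"
    have X0: "X \<ge> 0" unfolding X_def by simp
    have E0: "E > 0" "E2 > 0" unfolding E_def E2_def by auto
    have "m1 * E \<le> 1/2 * E" by (rule mult_right_mono) (use m1 E0 in auto)
    hence Cb: "Cb \<le> 1/2 * E" using Cb7 cle(3) unfolding E_def by linarith
    have s1: "Cb / 4 * (R * (R * E2)) \<le> (1/2 * E) / 4 * (R * (R * E2))"
      using Rpos E0 Cb by (intro mult_right_mono divide_right_mono) auto
    have s2: "(1/2 * E) / 4 * (R * (R * E2)) = 1/8 * X * (E * E2)"
      unfolding X_def power2_eq_square by simp
    have s3: "E * E2 = exp ((1/8) * (K - \<kappa>) * X)"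
      unfolding E_def E2_def X_def mult_exp_exp by (simp add: algebra_simps)
    have "(1/8) * (K - \<kappa>) * X \<le> (1/8) * (-48) * X"
      using Kk X0 by (intro mult_right_mono) auto
    hence s4: "exp ((1/8) * (K - \<kappa>) * X) \<le> exp (-6 * X)" by simp
    have "6 * X \<le> exp (6 * X)" using exp_ge_add_one_self[of "6 * X"] by linarith
    hence "X \<le> 1/6 * exp (6 * X)" by linarith
    hence "X / exp (6 * X) \<le> 1/6" by (subst pos_divide_le_eq) auto
    moreover have "X * exp (-6 * X) = X / exp (6 * X)"
      by (simp add: exp_minus divide_inverse)
    ultimately have s5: "X * exp (-6 * X) \<le> 1/6" by simp
    have "1/8 * X * exp ((1/8) * (K - \<kappa>) * X) \<le> 1/8 * X * exp (-6 * X)"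
      using s4 X0 by (intro mult_left_mono) auto
    also have "\<dots> \<le> 1/8 * (1/6)" using s5 by simp
    finally have "1/8 * X * (E * E2) \<le> 1/8 * (1/6)" unfolding s3 .
    thus ?thesis using s1 s2 unfolding E2_def by linarith
  qed
  define a where "a = exp (- (1/8) * K * R\<^sup>2) / 2"
  have apos: "a > 0" unfolding a_def by simp
  have phieq: "phif lam A At LU LW d = (\<lambda>s. exp (- (1/8) * K * s\<^sup>2))"
    by (rule ext) (simp add: phif_def K_def \<alpha>_def \<epsilon>_def)
  have flow: "ff lam A At LU LW d s \<ge> a * min s R" if "s \<ge> 0" for s
  proof -
    have "ff lam A At LU LW d s = integral {0..min s R} (\<lambda>u. phif lam A At LU LW d u *
        (1 - Cb / 4 * integral {0..u} (\<lambda>u. integral {0..u} (phif lam A At LU LW d) / phif lam A At LU LW d u)))"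
      unfolding ff_def gf_def Phif_def R_def Cb_def ..
    also have "\<dots> \<ge> exp (- (1/8) * K * R\<^sup>2) / 2 * min s R"
      by (rule f_lower[OF K0 Rpos _ small that phieq]) (use Cb7 cpos in simp)
    finally show ?thesis unfolding a_def .
  qed
  define P2 where "P2 = 9 / (2 * min lam 3)"
  define P where "P = sqrt P2"
  have P2: "P2 \<ge> 0" "P \<ge> 0" unfolding P_def P2_def using A1_lam by auto
  have Hb: "norm x + norm v \<le> P * sqrt (Hf U lam x v)"
           "(norm x)\<^sup>2 + (norm v)\<^sup>2 \<le> P2 * Hf U lam x v"
           "Hf U lam x v \<ge> 0" for x v :: 'a
  proof -
    have h: "(norm x + norm v)\<^sup>2 \<le> P2 * Hf U lam x v" "Hf U lam x v \<ge> 0"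
      using H_bound[of lam U x v, OF A1_lam A1_nonneg] unfolding P2_def by auto
    have "norm x + norm v = sqrt ((norm x + norm v)\<^sup>2)" by simp
    also have "\<dots> \<le> sqrt (P2 * Hf U lam x v)" using h(1) by (rule real_sqrt_le_mono)
    also have "\<dots> = P * sqrt (Hf U lam x v)" unfolding P_def by (simp add: real_sqrt_mult)
    finally show "norm x + norm v \<le> P * sqrt (Hf U lam x v)" .
    have "(norm x)\<^sup>2 + (norm v)\<^sup>2 \<le> (norm x + norm v)\<^sup>2"
      by (simp add: power2_eq_square algebra_simps)
    thus "(norm x)\<^sup>2 + (norm v)\<^sup>2 \<le> P2 * Hf U lam x v" using h by linarith
    show "Hf U lam x v \<ge> 0" by (rule h(2))
  qed
  show ?thesis
  proof (intro exI conjI allI)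
    have Qp: "1 + 2/\<alpha> > 0" using alpos by (simp add: add_pos_pos)
    have k1: "2*P/(\<epsilon>*a*R) \<ge> 0" "2*P2/(\<epsilon>*a*R) \<ge> 0" "P/(\<epsilon>*a*R) \<ge> 0"
      using apos epos Rpos P2 by auto
    show "(1 + 2/\<alpha>)/a + 2*P/(\<epsilon>*a*R) > 0"
      using Qp apos k1 alpos by (intro add_pos_nonneg divide_pos_pos) auto
    show "(1 + 2/\<alpha>)\<^sup>2*R/a + 2*P2/(\<epsilon>*a*R) > 0"
      using Qp apos k1 Rpos alpos by (intro add_pos_nonneg divide_pos_pos mult_pos_pos) auto
    show "1/a + (\<alpha>+1)*(2*P/(\<epsilon>*a*R)) > 0"
      using apos k1 alpos by (intro add_pos_nonneg mult_nonneg_nonneg) auto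
    show "1/(a*\<alpha>) + P/(\<epsilon>*a*R) > 0"
      using apos k1 alpos by (intro add_pos_nonneg) auto
    fix x x' v v' :: 'a
    have rd: "rdist \<alpha> x x' v v' = \<alpha> * norm (x - x') + norm (x - x' + v - v')"
      unfolding rdist_def ..
    have rho: "rho U lam A At LU LW (x, v) (x', v') = ff lam A At LU LW d (rdist \<alpha> x x' v v')
        * (1 + \<epsilon> * Hf U lam x v + \<epsilon> * Hf U lam x' v')"
      unfolding rho_def Let_def d_def \<epsilon>_def \<alpha>_def by simp
    have t1: "norm (v - v') \<le> norm (x - x' + v - v') + norm (x - x')"
    proof -
      have "v - v' = (x - x' + v - v') - (x - x')" by (simp add: algebra_simps)
      thus ?thesis by (metis norm_triangle_ineq4)
    qed
    have t2: "norm (x - x' + v - v') \<le> norm (x - x') + norm (v - v')"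
    proof -
      have "x - x' + v - v' = (x - x') + (v - v')" by (simp add: algebra_simps)
      thus ?thesis by (metis norm_triangle_ineq)
    qed
    have t3: "norm (x - x') \<le> norm x + norm x'" by (rule norm_triangle_ineq4)
    have t4: "norm (v - v') \<le> norm v + norm v'" by (rule norm_triangle_ineq4)
    have F: "ff lam A At LU LW d (rdist \<alpha> x x' v v') \<ge> a * min (\<alpha> * norm (x - x') + norm (x - x' + v - v')) R"
      using flow[of "rdist \<alpha> x x' v v'"] alpos unfolding rd by simp
    note main = final_arith[OF _ _ _ alpos apos Rpos epos _ P2(2) P2(1) Hb(3)[of x v] Hb(3)[of x' v']
        _ _ _ _ t1 t2 t3 t4 Hb(1)[of x v] Hb(1)[of x' v'] Hb(2)[of x v] Hb(2)[of x' v'] F]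
    have "ele1": "\<epsilon> \<le> 1" using ele by simp
    note M = main[OF norm_ge_zero norm_ge_zero norm_ge_zero ele1 norm_ge_zero norm_ge_zero norm_ge_zero norm_ge_zero]
    show "norm (x - x') + norm (v - v') \<le> ((1 + 2/\<alpha>)/a + 2*P/(\<epsilon>*a*R)) * rho U lam A At LU LW (x, v) (x', v')"
      using M unfolding rho by blast
    show "(norm (x - x'))\<^sup>2 + (norm (v - v'))\<^sup>2 \<le> ((1 + 2/\<alpha>)\<^sup>2*R/a + 2*P2/(\<epsilon>*a*R)) * rho U lam A At LU LW (x, v) (x', v')"
      using M unfolding rho by blast
    show "rdist (alph lam LU) x x' v v' \<le> (1/a + (\<alpha>+1)*(2*P/(\<epsilon>*a*R))) * rho U lam A At LU LW (x, v) (x', v')"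
      using M unfolding rho \<alpha>_def[symmetric] rd by blast
    show "norm (x - x') \<le> (1/(a*\<alpha>) + P/(\<epsilon>*a*R)) * ff lam A At LU LW DIM('a) (rdist (alph lam LU) x x' v v')
         * (1 + epsc lam A At LU LW DIM('a) * sqrt (Hf U lam x v)
              + epsc lam A At LU LW DIM('a) * sqrt (Hf U lam x' v'))"
      using M unfolding d_def[symmetric] \<alpha>_def[symmetric] \<epsilon>_def[symmetric] by blast
  qed
qed

end
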